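(* Assume every node of $G$ belongs to at least one $h$-clique, and let $f^*$ be any maximum flow in $\mathcal{H}$. For an independent component set $\mathcal{C}$ define $g(\mathcal{C})=\mathcal{C}\cup des(\mathcal{C})$. Then $g$ is a bijection from the family of independent component sets onto the family of d-closed component sets.
   Context: Let $G=(V,E)$ be a finite simple undirected graph and $h\ge2$. An $h$-clique is a set of $h$ pairwise adjacent nodes; $\mu_h(G[W])$ counts $h$-cliques inside $W$; for nonempty $W$, $\rho_h(W)=\mu_h(G[W])/|W|$; $\rho_h^*=\max_{\emptyset\ne W\subseteq V}\rho_h(W)$; $deg_G(v,h)$ is the number of $h$-cliques containing $v$; $\Lambda$ is the set of $(h-1)$-cliques of $G$ contained in some $h$-clique. Flow network $\mathcal{H}=(V_\mathcal{H},E_\mathcal{H},c)$: $V_\mathcal{H}=V\cup\Lambda\cup\{s,t\}$; for $v\in V$: arcs $(s,v)$ cap. $deg_G(v,h)$, $(v,t)$ cap. $h\rho_h^*$, $(v,s),(t,v)$ cap. $0$; for $\lambda\in\Lambda$, $v\in\lambda$: $(\lambda,v)$ cap. $+\infty$, $(v,\lambda)$ cap. $0$; for $\lambda\in\Lambda$, $v\in V$ with $\lambda\cup\{v\}$ an $h$-clique: $(v,\lambda)$ cap. $1$, $(\lambda,v)$ cap. $0$; no other arcs. A flow $f$ satisfies $f(u,v)\le c(u,v)$, $f(v,u)=-f(u,v)$, conservation at nodes other than $s,t$. The residual graph $\mathcal{H}_{f}$ has an arc $(u,v)$ whenever $(u,v)\in E_\mathcal{H}$ and $c(u,v)-f(u,v)>0$.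 The condensation $\mathcal{H}^C$ has the SCCs of $\mathcal{H}_{f^*}$ as nodes, with an arc $C\to C'$ ($C\ne C'$) whenever $\mathcal{H}_{f^*}$ has an arc from a node of $C$ to a node of $C'$. A non-trivial component is an SCC containing neither $s$ nor $t$. For a non-trivial component $C$, $des(C)$ (resp. $anc(C)$) is the set of non-trivial components $C'$ such that $\mathcal{H}^C$ has a directed path of length $\ge1$ from $C$ to $C'$ (resp. from $C'$ to $C$); for a set $\mathcal{C}$, $des(\mathcal{C})=\bigcup_{C\in\mathcal{C}}des(C)$. An independent component set is a set $\mathcal{C}$ of non-trivial components with $C\cap V\neq\emptyset$ for all $C\in\mathcal{C}$ and $C_1\notin des(C_2)$ for all $C_1,C_2\in\mathcal{C}$. A d-closed component set is a set $\mathcal{C}$ of non-trivial components such that every $C\in\mathcal{C}$ with $C\cap V=\emptyset$ has an incoming arc in $\mathcal{H}^C$ from some $C'\in\mathcal{C}$, and $des(\mathcal{C})\subseteq\mathcal{C}$. *)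

theory Defs
  imports Main "HOL-Library.Extended_Real"
begin

definition simple_graph :: "'v set \<Rightarrow> 'v set set \<Rightarrow> bool" where
  "simple_graph V E \<longleftrightarrow> finite V \<and> E \<subseteq> {{u, w} | u w. u \<in> V \<and> w \<in> V \<and> u \<noteq> w}"

definition is_hclique :: "'v set \<Rightarrow> 'v set set \<Rightarrow> nat \<Rightarrow> 'v set \<Rightarrow> bool" where
  "is_hclique V E h K \<longleftrightarrow> K \<subseteq> V \<and> finite K \<and> card K = h \<and>
     (\<forall>u\<in>K. \<forall>w\<in>K. u \<noteq> w \<longrightarrow> {u, w} \<in> E)"

definition mu :: "'v set \<Rightarrow> 'v set set \<Rightarrow> nat \<Rightarrow> 'v set \<Rightarrow> nat" where
  "mu V E h W = card {K. is_hclique V E h K \<and> K \<subseteq> W}"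

definition rho :: "'v set \<Rightarrow> 'v set set \<Rightarrow> nat \<Rightarrow> 'v set \<Rightarrow> real" where
  "rho V E h W = real (mu V E h W) / real (card W)"

definition rho_star :: "'v set \<Rightarrow> 'v set set \<Rightarrow> nat \<Rightarrow> real" where
  "rho_star V E h = Max {rho V E h W | W. W \<noteq> {} \<and> W \<subseteq> V}"

definition cdeg :: "'v set \<Rightarrow> 'v set set \<Rightarrow> nat \<Rightarrow> 'v \<Rightarrow> nat" where
  "cdeg V E h v = card {K. is_hclique V E h K \<and> v \<in> K}"

definition Lambda :: "'v set \<Rightarrow> 'v set set \<Rightarrow> nat \<Rightarrow> 'v set set" where
  "Lambda V E h = {L. is_hclique V E (h - 1) L \<and> (\<exists>K. is_hclique V E h K \<and> L \<subseteq> K)}"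

datatype 'v node = Src | Snk | Vert 'v | Lam "'v set"

definition VH :: "'v set \<Rightarrow> 'v set set \<Rightarrow> nat \<Rightarrow> 'v node set" where
  "VH V E h = {Src, Snk} \<union> Vert ` V \<union> Lam ` Lambda V E h"

definition EH :: "'v set \<Rightarrow> 'v set set \<Rightarrow> nat \<Rightarrow> ('v node \<times> 'v node) set" where
  "EH V E h =
     {(Src, Vert v) | v. v \<in> V} \<union> {(Vert v, Snk) | v. v \<in> V} \<union>
     {(Vert v, Src) | v. v \<in> V} \<union> {(Snk, Vert v) | v. v \<in> V} \<union>
     {(Lam L, Vert v) | L v. L \<in> Lambda V E h \<and> v \<in> L} \<union>
     {(Vert v, Lam L) | L v. L \<in> Lambda V E h \<and> v \<in> L} \<union>
     {(Vert v, Lam L) | L v. L \<in> Lambda V E h \<and> v \<in> V \<and> is_hclique V E h (insert v L)} \<union>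
     {(Lam L, Vert v) | L v. L \<in> Lambda V E h \<and> v \<in> V \<and> is_hclique V E h (insert v L)}"

fun cap :: "'v set \<Rightarrow> 'v set set \<Rightarrow> nat \<Rightarrow> 'v node \<Rightarrow> 'v node \<Rightarrow> ereal" where
  "cap V E h Src (Vert v) = (if v \<in> V then ereal (real (cdeg V E h v)) else 0)"
| "cap V E h (Vert v) Snk = (if v \<in> V then ereal (real h * rho_star V E h) else 0)"
| "cap V E h (Lam L) (Vert v) = (if L \<in> Lambda V E h \<and> v \<in> L then \<infinity> else 0)"
| "cap V E h (Vert v) (Lam L) =
     (if L \<in> Lambda V E h \<and> v \<in> V \<and> is_hclique V E h (insert v L) then 1 else 0)"
| "cap V E h _ _ = 0"

definition is_flow :: "'v set \<Rightarrow> 'v set set \<Rightarrow> nat \<Rightarrow> ('v node \<Rightarrow> 'v node \<Rightarrow> real) \<Rightarrow> bool" where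
  "is_flow V E h f \<longleftrightarrow>
     (\<forall>u\<in>VH V E h. \<forall>w\<in>VH V E h. ereal (f u w) \<le> cap V E h u w \<and> f w u = - f u w) \<and>
     (\<forall>u\<in>VH V E h - {Src, Snk}. (\<Sum>w\<in>VH V E h. f u w) = 0)"

definition flow_value :: "'v set \<Rightarrow> 'v set set \<Rightarrow> nat \<Rightarrow> ('v node \<Rightarrow> 'v node \<Rightarrow> real) \<Rightarrow> real" where
  "flow_value V E h f = (\<Sum>w\<in>VH V E h. f Src w)"

definition is_max_flow :: "'v set \<Rightarrow> 'v set set \<Rightarrow> nat \<Rightarrow> ('v node \<Rightarrow> 'v node \<Rightarrow> real) \<Rightarrow> bool" where
  "is_max_flow V E h f \<longleftrightarrow> is_flow V E h f \<and>
     (\<forall>g. is_flow V E h g \<longrightarrow> flow_value V E h g \<le> flow_value V E h f)"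

definition res_arcs :: "'v set \<Rightarrow> 'v set set \<Rightarrow> nat \<Rightarrow> ('v node \<Rightarrow> 'v node \<Rightarrow> real)
    \<Rightarrow> ('v node \<times> 'v node) set" where
  "res_arcs V E h f = {(u, w) \<in> EH V E h. cap V E h u w - ereal (f u w) > 0}"

definition scc_of :: "'v set \<Rightarrow> 'v set set \<Rightarrow> nat \<Rightarrow> ('v node \<Rightarrow> 'v node \<Rightarrow> real)
    \<Rightarrow> 'v node \<Rightarrow> 'v node set" where
  "scc_of V E h f x = {y \<in> VH V E h. (x, y) \<in> (res_arcs V E h f)\<^sup>* \<and> (y, x) \<in> (res_arcs V E h f)\<^sup>*}"

definition SCCs :: "'v set \<Rightarrow> 'v set set \<Rightarrow> nat \<Rightarrow> ('v node \<Rightarrow> 'v node \<Rightarrow> real) \<Rightarrow> 'v node set set" where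
  "SCCs V E h f = scc_of V E h f ` VH V E h"

definition cond_arcs :: "'v set \<Rightarrow> 'v set set \<Rightarrow> nat \<Rightarrow> ('v node \<Rightarrow> 'v node \<Rightarrow> real)
    \<Rightarrow> ('v node set \<times> 'v node set) set" where
  "cond_arcs V E h f = {(C, C'). C \<in> SCCs V E h f \<and> C' \<in> SCCs V E h f \<and> C \<noteq> C' \<and>
      (\<exists>u\<in>C. \<exists>w\<in>C'. (u, w) \<in> res_arcs V E h f)}"

definition nontrivial :: "'v set \<Rightarrow> 'v set set \<Rightarrow> nat \<Rightarrow> ('v node \<Rightarrow> 'v node \<Rightarrow> real)
    \<Rightarrow> 'v node set \<Rightarrow> bool" where
  "nontrivial V E h f C \<longleftrightarrow> C \<in> SCCs V E h f \<and> Src \<notin> C \<and> Snk \<notin> C"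

definition des :: "'v set \<Rightarrow> 'v set set \<Rightarrow> nat \<Rightarrow> ('v node \<Rightarrow> 'v node \<Rightarrow> real)
    \<Rightarrow> 'v node set \<Rightarrow> 'v node set set" where
  "des V E h f C = {C'. nontrivial V E h f C' \<and> (C, C') \<in> (cond_arcs V E h f)\<^sup>+}"

definition des_set :: "'v set \<Rightarrow> 'v set set \<Rightarrow> nat \<Rightarrow> ('v node \<Rightarrow> 'v node \<Rightarrow> real)
    \<Rightarrow> 'v node set set \<Rightarrow> 'v node set set" where
  "des_set V E h f \<C> = (\<Union>C\<in>\<C>. des V E h f C)"

text \<open>C \<inter> V \<noteq> {} (identifying v \<in> V with the network node Vert v).\<close>
definition meets_V :: "'v set \<Rightarrow> 'v node set \<Rightarrow> bool" where
  "meets_V V C \<longleftrightarrow> (\<exists>v\<in>V. Vert v \<in> C)"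

definition independent_set :: "'v set \<Rightarrow> 'v set set \<Rightarrow> nat \<Rightarrow> ('v node \<Rightarrow> 'v node \<Rightarrow> real)
    \<Rightarrow> 'v node set set \<Rightarrow> bool" where
  "independent_set V E h f \<C> \<longleftrightarrow>
     (\<forall>C\<in>\<C>. nontrivial V E h f C \<and> meets_V V C) \<and>
     (\<forall>C1\<in>\<C>. \<forall>C2\<in>\<C>. C1 \<notin> des V E h f C2)"

definition d_closed :: "'v set \<Rightarrow> 'v set set \<Rightarrow> nat \<Rightarrow> ('v node \<Rightarrow> 'v node \<Rightarrow> real)
    \<Rightarrow> 'v node set set \<Rightarrow> bool" where
  "d_closed V E h f \<C> \<longleftrightarrow>
     (\<forall>C\<in>\<C>. nontrivial V E h f C) \<and>
     (\<forall>C\<in>\<C>. \<not> meets_V V C \<longrightarrow> (\<exists>C'\<in>\<C>. (C', C) \<in> cond_arcs V E h f)) \<and>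
     des_set V E h f \<C> \<subseteq> \<C>"

end

theory Submission
  imports Defs "HOL-Library.Transitive_Closure_Table"
begin


locale netw =
  fixes V :: "'v set" and E :: "'v set set" and h :: nat and f :: "'v node \<Rightarrow> 'v node \<Rightarrow> real"
  assumes sg: "simple_graph V E" and h2: "h \<ge> 2"
    and cov: "\<forall>v\<in>V. \<exists>K. is_hclique V E h K \<and> v \<in> K"
    and mf: "is_max_flow V E h f"
begin

lemma finV: "finite V" using sg by (simp add: simple_graph_def)

lemma finLam: "finite (Lambda V E h)"
proof -
  have "Lambda V E h \<subseteq> Pow V" by (auto simp: Lambda_def is_hclique_def)
  thus ?thesis using finV finite_subset by blast
qed

lemma finVH: "finite (VH V E h)"
  using finV finLam by (simp add: VH_def)

lemma Lam_sub: "L \<in> Lambda V E h \<Longrightarrow> L \<subseteq> V" by (simp add: Lambda_def is_hclique_def)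
lemma VH_Vert: "v \<in> V \<Longrightarrow> Vert v \<in> VH V E h" by (simp add: VH_def)
lemma VH_Lam: "L \<in> Lambda V E h \<Longrightarrow> Lam L \<in> VH V E h" by (simp add: VH_def)
lemma VH_Src: "Src \<in> VH V E h" by (simp add: VH_def)
lemma VH_Snk: "Snk \<in> VH V E h" by (simp add: VH_def)
lemma EH_VH: "EH V E h \<subseteq> VH V E h \<times> VH V E h"
  unfolding EH_def by (intro Un_least; blast intro: VH_Vert VH_Lam VH_Src VH_Snk dest: Lam_sub)
lemma res_VH: "(u,w) \<in> res_arcs V E h f \<Longrightarrow> u \<in> VH V E h \<and> w \<in> VH V E h"
  using EH_VH by (auto simp: res_arcs_def)

lemma EH_sym: "(u,w) \<in> EH V E h \<Longrightarrow> (w,u) \<in> EH V E h"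
  unfolding EH_def 
  apply (elim UnE)
  apply (simp_all only: mem_Collect_eq prod.inject Un_iff)
  apply (elim exE conjE; simp)+
  done

lemma rho_star_nn: assumes "v \<in> V" shows "0 \<le> rho_star V E h"
proof -
  let ?S = "{rho V E h W | W. W \<noteq> {} \<and> W \<subseteq> V}"
  have "?S = (\<lambda>W. rho V E h W) ` {W. W \<noteq> {} \<and> W \<subseteq> V}" by auto
  moreover have "finite {W. W \<noteq> {} \<and> W \<subseteq> V}" using finV by simp
  ultimately have fin: "finite ?S" by simp
  have ne: "?S \<noteq> {}" using assms by auto
  have "Max ?S \<in> ?S" using fin ne by (rule Max_in)
  then show ?thesis by (auto simp: rho_star_def rho_def)
qed

lemma cap_nn: "0 \<le> cap V E h u w"
  by (cases u; cases w) (auto simp: rho_star_nn)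

lemma cap_EH: "cap V E h u w \<noteq> 0 \<Longrightarrow> (u,w) \<in> EH V E h"
  by (cases u; cases w) (auto simp: EH_def split: if_splits)

lemma cdeg_pos: assumes "v \<in> V" shows "cdeg V E h v > 0"
proof -
  have "{K. is_hclique V E h K \<and> v \<in> K} \<subseteq> Pow V" by (auto simp: is_hclique_def)
  hence "finite {K. is_hclique V E h K \<and> v \<in> K}" using finV finite_subset by blast
  moreover have "{K. is_hclique V E h K \<and> v \<in> K} \<noteq> {}" using cov assms by auto
  ultimately show ?thesis by (simp add: cdeg_def card_gt_0_iff)
qed

lemma flow: "is_flow V E h f" using mf by (simp add: is_max_flow_def)

lemma f_le: "u \<in> VH V E h \<Longrightarrow> w \<in> VH V E h \<Longrightarrow> ereal (f u w) \<le> cap V E h u w"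
  using flow unfolding is_flow_def by blast

lemma f_anti: "u \<in> VH V E h \<Longrightarrow> w \<in> VH V E h \<Longrightarrow> f w u = - f u w"
  using flow unfolding is_flow_def by blast

lemma f_cons: "u \<in> VH V E h \<Longrightarrow> u \<noteq> Src \<Longrightarrow> u \<noteq> Snk \<Longrightarrow> (\<Sum>w\<in>VH V E h. f u w) = 0"
  using flow unfolding is_flow_def by blast

lemma nonres: assumes "u \<in> VH V E h" "w \<in> VH V E h" "(u,w) \<notin> res_arcs V E h f"
  shows "cap V E h u w \<le> ereal (f u w)"
proof (cases "(u,w) \<in> EH V E h")
  case True
  hence "\<not> cap V E h u w - ereal (f u w) > 0" using assms(3) by (simp add: res_arcs_def)
  thus ?thesis by (cases "cap V E h u w") auto
next
  case False
  hence c1: "cap V E h u w = 0" using cap_EH by blast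
  have "(w,u) \<notin> EH V E h" using False EH_sym by blast
  hence c2: "cap V E h w u = 0" using cap_EH by blast
  have "f u w \<le> 0" using f_le[OF assms(1,2)] c1 by simp
  moreover have "f w u \<le> 0" using f_le[OF assms(2,1)] c2 by simp
  ultimately show ?thesis using f_anti[OF assms(1,2)] c1 by simp
qed

lemma cut_zero: assumes "Z \<subseteq> VH V E h" "Src \<notin> Z" "Snk \<notin> Z"
  shows "(\<Sum>z\<in>Z. \<Sum>w\<in>VH V E h - Z. f z w) = 0"
proof -
  have finZ: "finite Z" using assms(1) finVH finite_subset by blast
  have A: "(\<Sum>z\<in>Z. \<Sum>w\<in>VH V E h. f z w) = 0"
    using f_cons assms by (intro sum.neutral) auto
  have split: "\<And>z. (\<Sum>w\<in>VH V E h. f z w) = (\<Sum>w\<in>Z. f z w) + (\<Sum>w\<in>VH V E h - Z. f z w)"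
    using assms(1) finVH by (metis sum.subset_diff add.commute)
  have S: "(\<Sum>z\<in>Z. \<Sum>w\<in>Z. f z w) = - (\<Sum>z\<in>Z. \<Sum>w\<in>Z. f z w)"
  proof -
    have "(\<Sum>z\<in>Z. \<Sum>w\<in>Z. f z w) = (\<Sum>w\<in>Z. \<Sum>z\<in>Z. f z w)" by (rule sum.swap)
    also have "\<dots> = (\<Sum>w\<in>Z. \<Sum>z\<in>Z. - f w z)"
      using f_anti assms(1) by (intro sum.cong refl) (metis subsetD)
    also have "\<dots> = - (\<Sum>z\<in>Z. \<Sum>w\<in>Z. f z w)" by (simp add: sum_negf)
    finally show ?thesis .
  qed
  hence "(\<Sum>z\<in>Z. \<Sum>w\<in>Z. f z w) = 0" by simp
  with A show ?thesis by (simp add: split sum.distrib)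
qed

end

context netw begin

abbreviation "RS \<equiv> res_arcs V E h f"

lemma rt_VH: "(a,b) \<in> RS\<^sup>* \<Longrightarrow> a \<in> VH V E h \<Longrightarrow> b \<in> VH V E h"
  by (induct rule: rtrancl_induct) (auto dest: res_VH)

lemma scc_mem: "x \<in> VH V E h \<Longrightarrow> x \<in> scc_of V E h f x"
  by (simp add: scc_of_def)

lemma scc_sub: "scc_of V E h f x \<subseteq> VH V E h"
  by (auto simp: scc_of_def)

lemma scc_eq: "y \<in> scc_of V E h f x \<Longrightarrow> scc_of V E h f y = scc_of V E h f x"
  unfolding scc_of_def by (auto intro: rtrancl_trans)

lemma SCC_eq: "C \<in> SCCs V E h f \<Longrightarrow> a \<in> C \<Longrightarrow> C = scc_of V E h f a"
  unfolding SCCs_def using scc_eq by auto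

lemma SCC_reach: "C \<in> SCCs V E h f \<Longrightarrow> a \<in> C \<Longrightarrow> b \<in> C \<Longrightarrow> (a,b) \<in> RS\<^sup>*"
  unfolding SCCs_def scc_of_def by (auto intro: rtrancl_trans)

lemma mutual: "a \<in> VH V E h \<Longrightarrow> (a,b) \<in> RS\<^sup>* \<Longrightarrow> (b,a) \<in> RS\<^sup>* \<Longrightarrow> b \<in> scc_of V E h f a"
  unfolding scc_of_def using rt_VH by auto

lemma cond_SCC: "(C1,C2) \<in> cond_arcs V E h f \<Longrightarrow> C1 \<in> SCCs V E h f \<and> C2 \<in> SCCs V E h f \<and> C1 \<noteq> C2"
  by (simp add: cond_arcs_def)

lemma cond_reach1: assumes "(C1,C2) \<in> cond_arcs V E h f" "a \<in> C1" "b \<in> C2"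
  shows "(a,b) \<in> RS\<^sup>*"
proof -
  from assms(1) obtain u w where u: "u \<in> C1" and w: "w \<in> C2" and uw: "(u,w) \<in> RS"
    and C: "C1 \<in> SCCs V E h f" "C2 \<in> SCCs V E h f" by (auto simp: cond_arcs_def)
  have "(a,u) \<in> RS\<^sup>*" using SCC_reach[OF C(1) assms(2) u] .
  moreover have "(w,b) \<in> RS\<^sup>*" using SCC_reach[OF C(2) w assms(3)] .
  ultimately show ?thesis using uw by (meson rtrancl_into_rtrancl rtrancl_trans)
qed

lemma cond_reach: assumes "(C1,C2) \<in> (cond_arcs V E h f)\<^sup>+"
  shows "\<forall>a\<in>C1. \<forall>b\<in>C2. (a,b) \<in> RS\<^sup>*"
  using assms
proof (induct rule: trancl_induct)
  case (base y) then show ?case using cond_reach1 by blast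
next
  case (step y z)
  show ?case
  proof (intro ballI)
    fix a b assume a: "a \<in> C1" and b: "b \<in> z"
    have "y \<noteq> {}" using step(2) by (auto simp: cond_arcs_def)
    then obtain c where c: "c \<in> y" by auto
    have "(a,c) \<in> RS\<^sup>*" using step(3) a c by blast
    moreover have "(c,b) \<in> RS\<^sup>*" using cond_reach1[OF step(2) c b] .
    ultimately show "(a,b) \<in> RS\<^sup>*" by (rule rtrancl_trans)
  qed
qed

lemma SCC_ne: "C \<in> SCCs V E h f \<Longrightarrow> \<exists>x. x \<in> C \<and> C = scc_of V E h f x"
  unfolding SCCs_def using scc_mem by auto

lemma acyc: "(C,C) \<notin> (cond_arcs V E h f)\<^sup>+"
proof
  assume "(C,C) \<in> (cond_arcs V E h f)\<^sup>+"
  then obtain C1 where c1: "(C,C1) \<in> cond_arcs V E h f" and c2: "(C1,C) \<in> (cond_arcs V E h f)\<^sup>*"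
    by (meson tranclD)
  from cond_SCC[OF c1] have S: "C \<in> SCCs V E h f" "C1 \<in> SCCs V E h f" "C \<noteq> C1" by auto
  obtain a where a: "a \<in> C" using SCC_ne[OF S(1)] by auto
  obtain b where b: "b \<in> C1" using SCC_ne[OF S(2)] by auto
  have ab: "(a,b) \<in> RS\<^sup>*" using cond_reach1[OF c1 a b] .
  have ba: "(b,a) \<in> RS\<^sup>*"
  proof (cases "C1 = C")
    case True thus ?thesis using S by simp
  next
    case False
    hence "(C1,C) \<in> (cond_arcs V E h f)\<^sup>+" using c2 by (meson rtranclD)
    thus ?thesis using cond_reach a b by blast
  qed
  have "a \<in> VH V E h" using a SCC_eq[OF S(1) a] scc_sub by blast
  hence "b \<in> scc_of V E h f a" using mutual ab ba by blast
  hence "C1 = C" using SCC_eq[OF S(2) b] SCC_eq[OF S(1) a] scc_eq by metis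
  thus False using S by simp
qed

end


fun phi :: "'a \<Rightarrow> 'a list \<Rightarrow> 'a \<Rightarrow> 'a \<Rightarrow> real" where
  "phi x [] u w = 0"
| "phi x (y#ys) u w = phi y ys u w + (if u = x \<and> w = y then 1 else 0) - (if u = y \<and> w = x then 1 else 0)"

fun arcs :: "'a \<Rightarrow> 'a list \<Rightarrow> ('a \<times> 'a) set" where
  "arcs x [] = {}"
| "arcs x (y#ys) = insert (x,y) (arcs y ys)"

lemma phi_anti: "phi x xs w u = - phi x xs u w"
proof (induct xs arbitrary: x)
  case Nil show ?case by simp
next
  case (Cons y ys)
  have "phi y ys w u = - phi y ys u w" by (rule Cons)
  moreover have "(if w = x \<and> u = y then 1 else 0::real) = (if u = y \<and> w = x then 1 else 0)" by auto
  moreover have "(if w = y \<and> u = x then 1 else 0::real) = (if u = x \<and> w = y then 1 else 0)" by auto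
  ultimately show ?case by (simp only: phi.simps)
qed

lemma arcs_sub: "arcs x xs \<subseteq> set (x#xs) \<times> set xs"
  by (induct xs arbitrary: x) auto

lemma arcs_fin: "finite (arcs x xs)"
  by (induct xs arbitrary: x) auto

lemma phi_le: "distinct (x#xs) \<Longrightarrow> phi x xs u w \<le> (if (u,w) \<in> arcs x xs then 1 else 0)"
proof (induct xs arbitrary: x)
  case Nil thus ?case by simp
next
  case (Cons y ys)
  have dy: "distinct (y#ys)" using Cons(2) by simp
  have IH: "phi y ys u w \<le> (if (u,w) \<in> arcs y ys then 1 else 0)" by (rule Cons(1)[OF dy])
  have xn: "x \<notin> set (y#ys)" using Cons(2) by simp
  have eq: "phi x (y#ys) u w = phi y ys u w + (if u = x \<and> w = y then 1 else 0) - (if u = y \<and> w = x then 1 else 0)"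
    by (simp only: phi.simps)
  have nn: "(0::real) \<le> (if u = y \<and> w = x then 1 else 0)" by simp
  show ?case
  proof (cases "u = x \<and> w = y")
    case True
    hence "(u,w) \<notin> arcs y ys" using xn arcs_sub[of y ys] by auto
    hence p0: "phi y ys u w \<le> 0" using IH by simp
    have i1: "(if u = x \<and> w = y then 1 else 0::real) = 1" using True by simp
    have in1: "(u,w) \<in> arcs x (y#ys)" using True by simp
    have "phi x (y#ys) u w \<le> 1" using eq i1 nn p0 by linarith
    thus ?thesis using in1 by simp
  next
    case False
    have i1: "(if u = x \<and> w = y then 1 else 0::real) = 0" using False by simp
    have "phi x (y#ys) u w \<le> phi y ys u w" using eq nn i1 by linarith
    also have "\<dots> \<le> (if (u,w) \<in> arcs y ys then 1 else 0)" by (rule IH)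
    also have "\<dots> \<le> (if (u,w) \<in> arcs x (y#ys) then 1 else 0)" by simp
    finally show ?thesis .
  qed
qed

lemma sum_ind: "finite S \<Longrightarrow> y \<in> S \<Longrightarrow> (\<Sum>w\<in>S. (if u = x \<and> w = y then 1 else 0::real)) = (if u = x then 1 else 0)"
proof (cases "u = x")
  case True
  assume "finite S" "y \<in> S"
  thus ?thesis using True by simp
qed simp

lemma phi_sum:
  assumes "rtrancl_path r x xs z" "\<And>a b. r a b \<Longrightarrow> a \<in> S \<and> b \<in> S" "finite S" "x \<in> S"
  shows "(\<Sum>w\<in>S. phi x xs u w) = (if u = x then 1 else 0) - (if u = z then 1 else 0)"
  using assms
proof (induct rule: rtrancl_path.induct)
  case (base x) thus ?case by simp
next
  case (step x y ys z)
  have yS: "y \<in> S" using step by blast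
  have IH: "(\<Sum>w\<in>S. phi y ys u w) = (if u = y then 1 else 0) - (if u = z then 1 else 0)"
    using step yS by blast
  have s1: "(\<Sum>w\<in>S. (if u = x \<and> w = y then 1 else 0::real)) = (if u = x then 1 else 0)"
    using yS step(5) by (rule sum_ind[rotated])
  have s2: "(\<Sum>w\<in>S. (if u = y \<and> w = x then 1 else 0::real)) = (if u = y then 1 else 0)"
    using step(6) step(5) by (rule sum_ind[rotated])
  have "(\<Sum>w\<in>S. phi x (y#ys) u w) = (\<Sum>w\<in>S. phi y ys u w) + (\<Sum>w\<in>S. (if u = x \<and> w = y then 1 else 0::real))
          - (\<Sum>w\<in>S. (if u = y \<and> w = x then 1 else 0::real))"
    by (simp only: phi.simps sum.distrib sum_subtractf)
  also have "\<dots> = (if u = x then 1 else 0) - (if u = z then 1 else 0)" unfolding IH s1 s2 by simp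
  finally show ?case .
qed

lemma arcs_path: "rtrancl_path r x xs z \<Longrightarrow> (a,b) \<in> arcs x xs \<Longrightarrow> r a b"
  by (induct rule: rtrancl_path.induct) auto
context netw begin

lemma closed_cap:
  assumes R: "R \<subseteq> VH V E h" "Src \<notin> R" "Snk \<notin> R"
    and cl: "\<And>r w. r \<in> R \<Longrightarrow> (r,w) \<in> RS \<Longrightarrow> w \<in> R"
    and r: "r \<in> R" and w: "w \<in> VH V E h" and c: "cap V E h r w \<noteq> 0"
  shows "w \<in> R"
proof (rule ccontr)
  assume wn: "w \<notin> R"
  have finR: "finite R" using R(1) finVH finite_subset by blast
  have nn: "\<And>z y. z \<in> R \<Longrightarrow> y \<in> VH V E h - R \<Longrightarrow> 0 \<le> f z y"
  proof -
    fix z y assume z: "z \<in> R" and y: "y \<in> VH V E h - R"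
    have "(z,y) \<notin> RS" using cl z y by blast
    hence "cap V E h z y \<le> ereal (f z y)" using nonres z y R(1) by blast
    thus "0 \<le> f z y" using cap_nn[of z y] by (metis ereal_less_eq(5) order_trans)
  qed
  have s0: "(\<Sum>z\<in>R. \<Sum>y\<in>VH V E h - R. f z y) = 0" using cut_zero R by blast
  have "\<forall>z\<in>R. (\<Sum>y\<in>VH V E h - R. f z y) = 0"
    using s0 finR nn by (subst (asm) sum_nonneg_eq_0_iff) (auto intro: sum_nonneg)
  hence "(\<Sum>y\<in>VH V E h - R. f r y) = 0" using r by blast
  hence "\<forall>y\<in>VH V E h - R. f r y = 0"
    using finVH nn r by (subst (asm) sum_nonneg_eq_0_iff) auto
  hence "f r w = 0" using w wn by blast
  moreover have "cap V E h r w \<le> ereal (f r w)"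
    using nonres r w R(1) cl wn by blast
  ultimately show False using c cap_nn[of r w] by (simp add: zero_ereal_def[symmetric] antisym)
qed

lemma reach_st:
  assumes v: "v \<in> V"
  shows "(Src, Vert v) \<in> RS\<^sup>* \<or> (Snk, Vert v) \<in> RS\<^sup>*"
proof (rule ccontr)
  assume nv: "\<not> ?thesis"
  define Y where "Y = {w \<in> VH V E h. (Src,w) \<in> RS\<^sup>* \<or> (Snk,w) \<in> RS\<^sup>*}"
  define Z where "Z = VH V E h - Y"
  have YZ: "VH V E h - Z = Y" unfolding Z_def Y_def by auto
  have SrcY: "Src \<in> Y" unfolding Y_def using VH_Src by simp
  have SnkY: "Snk \<in> Y" unfolding Y_def using VH_Snk by simp
  have vZ: "Vert v \<in> Z" unfolding Z_def Y_def using nv VH_Vert[OF v] by auto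
  have finZ: "finite Z" unfolding Z_def using finVH by simp
  have np: "\<And>z y. z \<in> Z \<Longrightarrow> y \<in> VH V E h - Z \<Longrightarrow> 0 \<le> - f z y"
  proof -
    fix z y assume z: "z \<in> Z" and y: "y \<in> VH V E h - Z"
    have yY: "y \<in> Y" using y YZ by simp
    have zV: "z \<in> VH V E h" using z Z_def by simp
    have yV: "y \<in> VH V E h" using y by simp
    have "(y,z) \<notin> RS"
    proof
      assume "(y,z) \<in> RS"
      hence "z \<in> Y" using yY zV unfolding Y_def by (auto intro: rtrancl_into_rtrancl)
      thus False using z Z_def by simp
    qed
    hence "cap V E h y z \<le> ereal (f y z)" using nonres yV zV by blast
    hence "0 \<le> f y z" using cap_nn[of y z] by (metis ereal_less_eq(5) order_trans)
    thus "0 \<le> - f z y" using f_anti[OF yV zV] by simp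
  qed
  have s0: "(\<Sum>z\<in>Z. \<Sum>y\<in>VH V E h - Z. - f z y) = 0"
    using cut_zero[of Z] SrcY SnkY Z_def by (simp add: sum_negf)
  have "\<forall>z\<in>Z. (\<Sum>y\<in>VH V E h - Z. - f z y) = 0"
    using s0 finZ np by (subst (asm) sum_nonneg_eq_0_iff) (auto intro: sum_nonneg)
  hence "(\<Sum>y\<in>VH V E h - Z. - f (Vert v) y) = 0" using vZ by blast
  hence "\<forall>y\<in>VH V E h - Z. - f (Vert v) y = 0"
    using finVH np vZ by (subst (asm) sum_nonneg_eq_0_iff) auto
  hence "f (Vert v) Src = 0" using SrcY YZ by (metis neg_equal_0_iff_equal)
  hence "f Src (Vert v) = 0" using f_anti[OF VH_Src VH_Vert[OF v]] by simp
  moreover have "(Src, Vert v) \<notin> RS" using nv by auto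
  hence "cap V E h Src (Vert v) \<le> ereal (f Src (Vert v))" using nonres[OF VH_Src VH_Vert[OF v]] by blast
  ultimately have "cap V E h Src (Vert v) \<le> 0" by (simp add: zero_ereal_def)
  thus False using cdeg_pos[OF v] v by simp
qed

end

context netw begin

lemma lam_ext:
  assumes L: "L \<in> Lambda V E h" and u: "u \<in> L"
  shows "\<exists>x M. x \<in> V \<and> M \<in> Lambda V E h \<and> cap V E h (Vert u) (Lam M) = 1
           \<and> cap V E h (Lam M) (Vert x) = \<infinity> \<and> cap V E h (Vert x) (Lam L) = 1"
proof -
  from L have hL: "is_hclique V E (h - 1) L" and "\<exists>K. is_hclique V E h K \<and> L \<subseteq> K"
    by (auto simp: Lambda_def)
  then obtain K where hK: "is_hclique V E h K" and LK: "L \<subseteq> K" by blast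
  have finK: "finite K" and cK: "card K = h" and KV: "K \<subseteq> V"
    and adjK: "\<forall>a\<in>K. \<forall>b\<in>K. a \<noteq> b \<longrightarrow> {a,b} \<in> E" using hK by (auto simp: is_hclique_def)
  have finL: "finite L" and cL: "card L = h - 1" using hL by (auto simp: is_hclique_def)
  have "\<not> K \<subseteq> L"
  proof
    assume "K \<subseteq> L"
    hence "card K \<le> card L" using finL card_mono by blast
    thus False using cK cL h2 by simp
  qed
  then obtain x where xK: "x \<in> K" and xL: "x \<notin> L" by blast
  have uK: "u \<in> K" using u LK by blast
  have xu: "x \<noteq> u" using xL u by blast
  define M where "M = K - {u}"
  have hM: "is_hclique V E (h - 1) M"
    unfolding is_hclique_def M_def using finK cK KV adjK uK by (auto simp: card_Diff_singleton)
  have MLm: "M \<in> Lambda V E h" unfolding Lambda_def using hM hK M_def by blast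
  have insM: "insert u M = K" unfolding M_def using uK by blast
  have uV: "u \<in> V" using uK KV by blast
  have xV: "x \<in> V" using xK KV by blast
  have xM: "x \<in> M" unfolding M_def using xK xu by blast
  have cxL: "card (insert x L) = h" using finL xL cL h2 by simp
  have hxL: "is_hclique V E h (insert x L)"
    unfolding is_hclique_def using cxL finL xK LK KV adjK by (auto simp: subset_iff)
  have c1: "cap V E h (Vert u) (Lam M) = 1" using MLm uV hK insM by simp
  have c2: "cap V E h (Lam M) (Vert x) = \<infinity>" using MLm xM by simp
  have c3: "cap V E h (Vert x) (Lam L) = 1" using L xV hxL by simp
  show ?thesis using xV MLm c1 c2 c3 by blast
qed

lemma Lam_res: "L \<in> Lambda V E h \<Longrightarrow> u \<in> L \<Longrightarrow> (Lam L, Vert u) \<in> RS"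
  unfolding res_arcs_def EH_def by simp

lemma R_lemma:
  assumes L: "L \<in> Lambda V E h" and u: "u \<in> L"
    and noV: "\<And>v. Vert v \<notin> scc_of V E h f (Lam L)"
  shows "(Vert u, Src) \<in> RS\<^sup>* \<or> (Vert u, Snk) \<in> RS\<^sup>*"
proof (rule ccontr)
  assume nr: "\<not> ?thesis"
  define R where "R = {w \<in> VH V E h. (Vert u, w) \<in> RS\<^sup>*}"
  have R1: "R \<subseteq> VH V E h" unfolding R_def by auto
  have R2: "Src \<notin> R" "Snk \<notin> R" unfolding R_def using nr by auto
  have cl: "\<And>r w. r \<in> R \<Longrightarrow> (r,w) \<in> RS \<Longrightarrow> w \<in> R"
    unfolding R_def using res_VH by (auto intro: rtrancl_into_rtrancl)
  have uV: "u \<in> V" using Lam_sub[OF L] u by blast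
  have uR: "Vert u \<in> R" unfolding R_def using VH_Vert[OF uV] by simp
  obtain x M where xV: "x \<in> V" and MLm: "M \<in> Lambda V E h"
    and c1: "cap V E h (Vert u) (Lam M) = 1" and c2: "cap V E h (Lam M) (Vert x) = \<infinity>"
    and c3: "cap V E h (Vert x) (Lam L) = 1" using lam_ext[OF L u] by blast
  have mR: "Lam M \<in> R" using closed_cap[OF R1 R2 cl uR VH_Lam[OF MLm]] c1 by simp
  have xR: "Vert x \<in> R" using closed_cap[OF R1 R2 cl mR VH_Vert[OF xV]] c2 by simp
  have "Lam L \<in> R" using closed_cap[OF R1 R2 cl xR VH_Lam[OF L]] c3 by simp
  hence "(Vert u, Lam L) \<in> RS\<^sup>*" unfolding R_def by simp
  moreover have "(Lam L, Vert u) \<in> RS\<^sup>*" using Lam_res[OF L u] by blast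
  ultimately have "Vert u \<in> scc_of V E h f (Lam L)" using mutual VH_Lam[OF L] by blast
  thus False using noV by blast
qed

end


lemma rt_to_p: "(a,b) \<in> r\<^sup>* \<Longrightarrow> (\<lambda>x y. (x,y) \<in> r)\<^sup>*\<^sup>* a b"
  by (induct rule: rtrancl_induct) (auto intro: rtranclp.rtrancl_into_rtrancl)

context netw begin

lemma no_aug: "(Src, Snk) \<notin> RS\<^sup>*"
proof
  assume "(Src, Snk) \<in> RS\<^sup>*"
  hence "(\<lambda>x y. (x,y) \<in> RS)\<^sup>*\<^sup>* Src Snk" by (rule rt_to_p)
  then obtain xs0 where "rtrancl_path (\<lambda>x y. (x,y) \<in> RS) Src xs0 Snk"
    by (auto simp: rtranclp_eq_rtrancl_path)
  then obtain xs where P: "rtrancl_path (\<lambda>x y. (x,y) \<in> RS) Src xs Snk"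
    and D: "distinct (Src # xs)" by (rule rtrancl_path_distinct)
  define A where "A = arcs Src xs"
  have AR: "\<And>a b. (a,b) \<in> A \<Longrightarrow> (a,b) \<in> RS" unfolding A_def using arcs_path[OF P] by blast
  define q where "q = (\<lambda>(u,w). if cap V E h u w = \<infinity> then 1 else real_of_ereal (cap V E h u w) - f u w)"
  define eps where "eps = Min (insert 1 (q ` A))"
  have finQ: "finite (insert 1 (q ` A))" unfolding A_def using arcs_fin[of Src xs] by simp
  have qpos: "\<And>a. a \<in> A \<Longrightarrow> q a > 0"
  proof -
    fix a assume aA: "a \<in> A"
    obtain u w where a: "a = (u,w)" by (cases a)
    have r: "(u,w) \<in> RS" using AR aA a by simp
    hence pos: "cap V E h u w - ereal (f u w) > 0" by (simp add: res_arcs_def)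
    show "q a > 0"
    proof (cases "cap V E h u w = \<infinity>")
      case True thus ?thesis by (simp add: q_def a)
    next
      case False
      moreover have "cap V E h u w \<noteq> -\<infinity>" using cap_nn[of u w] by auto
      ultimately obtain c where c: "cap V E h u w = ereal c" by (cases "cap V E h u w") auto
      thus ?thesis using pos by (simp add: q_def a)
    qed
  qed
  have epos: "eps > 0" unfolding eps_def using finQ qpos by (subst Min_gr_iff) auto
  have eleq: "\<And>a. a \<in> A \<Longrightarrow> eps \<le> q a" unfolding eps_def using finQ by (intro Min_le) auto
  define g where "g = (\<lambda>u w. f u w + eps * phi Src xs u w)"
  have Sv: "\<And>a b. (\<lambda>x y. (x,y) \<in> RS) a b \<Longrightarrow> a \<in> VH V E h \<and> b \<in> VH V E h" using res_VH by blast
  have psum: "\<And>u. (\<Sum>w\<in>VH V E h. phi Src xs u w) = (if u = Src then 1 else 0) - (if u = Snk then 1 else 0)"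
    using phi_sum[OF P Sv finVH VH_Src] by blast
  have gflow: "is_flow V E h g"
    unfolding is_flow_def
  proof (intro conjI ballI)
    fix u w assume u: "u \<in> VH V E h" and w: "w \<in> VH V E h"
    show "g w u = - g u w" unfolding g_def using f_anti[OF u w] phi_anti[of Src xs w u] by simp
    show "ereal (g u w) \<le> cap V E h u w"
    proof (cases "(u,w) \<in> A")
      case True
      have "phi Src xs u w \<le> 1" using phi_le[OF D, of u w] True by (simp add: A_def)
      hence g1: "g u w \<le> f u w + eps" unfolding g_def using epos by (simp add: mult_left_le)
      show ?thesis
      proof (cases "cap V E h u w = \<infinity>")
        case True thus ?thesis by simp
      next
        case False
        moreover have "cap V E h u w \<noteq> -\<infinity>" using cap_nn[of u w] by auto
        ultimately obtain c where c: "cap V E h u w = ereal c" by (cases "cap V E h u w") auto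
        have "eps \<le> q (u,w)" using eleq True by blast
        hence "eps \<le> c - f u w" using c by (simp add: q_def)
        hence "g u w \<le> c" using g1 by linarith
        thus ?thesis using c by simp
      qed
    next
      case False
      have "phi Src xs u w \<le> 0" using phi_le[OF D, of u w] False by (simp add: A_def)
      hence "g u w \<le> f u w" unfolding g_def using epos by (simp add: mult_nonneg_nonpos)
      thus ?thesis using f_le[OF u w] by (meson ereal_less_eq(3) order_trans)
    qed
  next
    fix u assume u: "u \<in> VH V E h - {Src, Snk}"
    have "(\<Sum>w\<in>VH V E h. g u w) = (\<Sum>w\<in>VH V E h. f u w) + eps * (\<Sum>w\<in>VH V E h. phi Src xs u w)"
      unfolding g_def by (simp add: sum.distrib sum_distrib_left)
    also have "\<dots> = 0" using f_cons[of u] u psum[of u] by simp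
    finally show "(\<Sum>w\<in>VH V E h. g u w) = 0" .
  qed
  have "flow_value V E h g = flow_value V E h f + eps * (\<Sum>w\<in>VH V E h. phi Src xs Src w)"
    unfolding g_def flow_value_def by (simp add: sum.distrib sum_distrib_left)
  also have "\<dots> = flow_value V E h f + eps" using psum[of Src] by simp
  finally have "flow_value V E h g > flow_value V E h f" using epos by simp
  moreover have "flow_value V E h g \<le> flow_value V E h f" using mf gflow by (simp add: is_max_flow_def)
  ultimately show False by simp
qed

end

context netw begin

abbreviation "CA \<equiv> cond_arcs V E h f"

lemma key:
  assumes C0: "nontrivial V E h f C0" "meets_V V C0"
    and C: "nontrivial V E h f C" "\<not> meets_V V C"
    and Cp: "(C', C) \<in> CA" "(C0, C') \<in> CA\<^sup>+"
  shows "nontrivial V E h f C'"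
proof (rule ccontr)
  assume nt: "\<not> nontrivial V E h f C'"
  have C'S: "C' \<in> SCCs V E h f" using cond_SCC[OF Cp(1)] by blast
  have CS: "C \<in> SCCs V E h f" and sC: "Src \<notin> C" and tC: "Snk \<notin> C"
    using C(1) by (auto simp: nontrivial_def)
  have C0S: "C0 \<in> SCCs V E h f" and sC0: "Src \<notin> C0" and tC0: "Snk \<notin> C0"
    using C0(1) by (auto simp: nontrivial_def)
  obtain v0 where v0: "v0 \<in> V" "Vert v0 \<in> C0" using C0(2) by (auto simp: meets_V_def)
  obtain y where yC: "y \<in> C" and Cy: "C = scc_of V E h f y" using SCC_ne[OF CS] by blast
  have yV: "y \<in> VH V E h" using yC Cy scc_sub by blast
  have noV: "\<And>v. Vert v \<notin> C"
  proof
    fix v assume "Vert v \<in> C"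
    hence "Vert v \<in> VH V E h" using Cy scc_sub by blast
    hence "v \<in> V" unfolding VH_def by auto
    thus False using C(2) \<open>Vert v \<in> C\<close> by (auto simp: meets_V_def)
  qed
  obtain L where yL: "y = Lam L" and L: "L \<in> Lambda V E h"
  proof (cases y)
    case Src thus ?thesis using yC sC by simp
  next
    case Snk thus ?thesis using yC tC by simp
  next
    case (Vert v) thus ?thesis using yC noV by simp
  next
    case (Lam L) thus ?thesis using that yV unfolding VH_def by auto
  qed
  have CL: "C = scc_of V E h f (Lam L)" using Cy yL by simp
  from nt C'S have "Src \<in> C' \<or> Snk \<in> C'" by (auto simp: nontrivial_def)
  thus False
  proof
    assume sC': "Src \<in> C'"
    have r1: "(Src, Lam L) \<in> RS\<^sup>*" using cond_reach1[OF Cp(1) sC' yC] yL by simp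
    have "L \<noteq> {}"
    proof
      assume "L = {}"
      hence "card L = 0" by simp
      moreover have "card L = h - 1" using L by (auto simp: Lambda_def is_hclique_def)
      ultimately show False using h2 by simp
    qed
    then obtain u where u: "u \<in> L" by blast
    have lu: "(Lam L, Vert u) \<in> RS" by (rule Lam_res[OF L u])
    have "(Vert u, Src) \<in> RS\<^sup>* \<or> (Vert u, Snk) \<in> RS\<^sup>*"
      using R_lemma[OF L u] noV CL by blast
    thus False
    proof
      assume "(Vert u, Src) \<in> RS\<^sup>*"
      hence "(Lam L, Src) \<in> RS\<^sup>*" using lu by (meson converse_rtrancl_into_rtrancl)
      hence "Lam L \<in> scc_of V E h f Src" using mutual[OF VH_Src r1] by blast
      hence "C = scc_of V E h f Src" using CL scc_eq by metis
      thus False using sC scc_mem[OF VH_Src] by simp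
    next
      assume "(Vert u, Snk) \<in> RS\<^sup>*"
      hence "(Src, Snk) \<in> RS\<^sup>*" using r1 lu by (meson converse_rtrancl_into_rtrancl rtrancl_trans)
      thus False using no_aug by blast
    qed
  next
    assume tC': "Snk \<in> C'"
    have r1: "(Vert v0, Snk) \<in> RS\<^sup>*" using cond_reach[OF Cp(2)] v0(2) tC' by blast
    from reach_st[OF v0(1)] show False
    proof
      assume "(Src, Vert v0) \<in> RS\<^sup>*"
      thus False using r1 no_aug by (meson rtrancl_trans)
    next
      assume "(Snk, Vert v0) \<in> RS\<^sup>*"
      hence "Vert v0 \<in> scc_of V E h f Snk" using mutual[OF VH_Snk _ r1] by blast
      hence "C0 = scc_of V E h f Snk" using SCC_eq[OF C0S v0(2)] scc_eq by metis
      thus False using tC0 scc_mem[OF VH_Snk] by simp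
    qed
  qed
qed

lemma des_trans: "C1 \<in> des V E h f C \<Longrightarrow> C2 \<in> des V E h f C1 \<Longrightarrow> C2 \<in> des V E h f C"
  unfolding des_def by (auto intro: trancl_trans)

lemma des_set_g: "des_set V E h f (\<C> \<union> des_set V E h f \<C>) = des_set V E h f \<C>"
  unfolding des_set_def using des_trans by blast

lemma g_dclosed: assumes I: "independent_set V E h f \<C>"
  shows "d_closed V E h f (\<C> \<union> des_set V E h f \<C>)"
  unfolding d_closed_def
proof (intro conjI ballI impI)
  fix C assume "C \<in> \<C> \<union> des_set V E h f \<C>"
  thus "nontrivial V E h f C" using I
    by (auto simp: independent_set_def des_set_def des_def)
next
  fix C assume Cg: "C \<in> \<C> \<union> des_set V E h f \<C>" and nm: "\<not> meets_V V C"
  have "C \<notin> \<C>" using I nm by (auto simp: independent_set_def)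
  then obtain C0 where C0: "C0 \<in> \<C>" and CC: "C \<in> des V E h f C0" using Cg by (auto simp: des_set_def)
  have n0: "nontrivial V E h f C0" "meets_V V C0" using I C0 by (auto simp: independent_set_def)
  have nC: "nontrivial V E h f C" and tr: "(C0, C) \<in> CA\<^sup>+" using CC by (auto simp: des_def)
  from tr show "\<exists>C'\<in>\<C> \<union> des_set V E h f \<C>. (C', C) \<in> CA"
  proof (cases rule: tranclE)
    case base thus ?thesis using C0 by blast
  next
    case (step C')
    have "nontrivial V E h f C'" using key[OF n0 nC nm step(2) step(1)] .
    hence "C' \<in> des V E h f C0" using step(1) by (simp add: des_def)
    thus ?thesis using step(2) C0 by (auto simp: des_set_def)
  qed
next
  show "des_set V E h f (\<C> \<union> des_set V E h f \<C>) \<subseteq> \<C> \<union> des_set V E h f \<C>"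
    using des_set_g by blast
qed

lemma g_inv: assumes I: "independent_set V E h f \<C>"
  shows "(\<C> \<union> des_set V E h f \<C>) - des_set V E h f (\<C> \<union> des_set V E h f \<C>) = \<C>"
proof -
  have "\<C> \<inter> des_set V E h f \<C> = {}" using I by (auto simp: independent_set_def des_set_def)
  thus ?thesis using des_set_g by blast
qed

lemma finSCC: "finite (SCCs V E h f)" unfolding SCCs_def using finVH by simp

lemma surj_part: assumes D: "d_closed V E h f D"
  shows "independent_set V E h f (D - des_set V E h f D)"
    and "(D - des_set V E h f D) \<union> des_set V E h f (D - des_set V E h f D) = D"
proof -
  let ?C = "D - des_set V E h f D"
  have Dn: "\<And>C. C \<in> D \<Longrightarrow> nontrivial V E h f C" using D by (simp add: d_closed_def)
  have Dc: "des_set V E h f D \<subseteq> D" using D by (simp add: d_closed_def)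
  show "independent_set V E h f ?C"
    unfolding independent_set_def
  proof (intro conjI ballI)
    fix C assume C: "C \<in> ?C"
    show "nontrivial V E h f C" using C Dn by blast
    show "meets_V V C"
    proof (rule ccontr)
      assume "\<not> meets_V V C"
      then obtain C' where "C' \<in> D" "(C', C) \<in> CA" using D C by (auto simp: d_closed_def)
      hence "C \<in> des_set V E h f D" using Dn C by (auto simp: des_set_def des_def)
      thus False using C by blast
    qed
  next
    fix C1 C2 assume "C1 \<in> ?C" "C2 \<in> ?C"
    thus "C1 \<notin> des V E h f C2" by (auto simp: des_set_def)
  qed
  have sub: "des_set V E h f ?C \<subseteq> des_set V E h f D" by (auto simp: des_set_def)
  define Rel where "Rel = {(C', C). C' \<in> D \<and> C \<in> D \<and> (C', C) \<in> CA\<^sup>+}"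
  have finD: "finite D" using finSCC Dn by (metis nontrivial_def finite_subset subsetI)
  have "Rel \<subseteq> D \<times> D" unfolding Rel_def by auto
  hence finR: "finite Rel" using finD finite_subset by blast
  have acR: "acyclic Rel"
  proof -
    have "acyclic CA" unfolding acyclic_def using acyc by blast
    hence "acyclic (CA\<^sup>+)" by (simp add: acyclic_def)
    thus ?thesis by (rule acyclic_subset) (auto simp: Rel_def)
  qed
  have wfR: "wf Rel" using finR acR by (rule finite_acyclic_wf)
  have main: "\<And>C. C \<in> D \<longrightarrow> C \<in> ?C \<or> (\<exists>C'\<in>?C. C \<in> des V E h f C')"
  proof -
    fix C show "C \<in> D \<longrightarrow> C \<in> ?C \<or> (\<exists>C'\<in>?C. C \<in> des V E h f C')"
    proof (induct C rule: wf_induct[OF wfR])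
      case (1 C)
      show ?case
      proof
        assume CD: "C \<in> D"
        show "C \<in> ?C \<or> (\<exists>C'\<in>?C. C \<in> des V E h f C')"
        proof (cases "C \<in> des_set V E h f D")
          case False thus ?thesis using CD by blast
        next
          case True
          then obtain C'' where C'': "C'' \<in> D" "C \<in> des V E h f C''" by (auto simp: des_set_def)
          hence "(C'', C) \<in> Rel" using CD by (auto simp: Rel_def des_def)
          hence "C'' \<in> ?C \<or> (\<exists>C'\<in>?C. C'' \<in> des V E h f C')" using 1 C''(1) by blast
          thus ?thesis using C''(2) des_trans by blast
        qed
      qed
    qed
  qed
  show "?C \<union> des_set V E h f ?C = D"
  proof
    show "?C \<union> des_set V E h f ?C \<subseteq> D" using sub Dc by blast
    show "D \<subseteq> ?C \<union> des_set V E h f ?C" using main by (auto simp: des_set_def)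
  qed
qed

theorem bij: "bij_betw (\<lambda>\<C>. \<C> \<union> des_set V E h f \<C>)
           {\<C>. independent_set V E h f \<C>} {\<C>. d_closed V E h f \<C>}"
  unfolding bij_betw_def
proof
  show "inj_on (\<lambda>\<C>. \<C> \<union> des_set V E h f \<C>) {\<C>. independent_set V E h f \<C>}"
    by (rule inj_onI) (metis g_inv mem_Collect_eq)
  show "(\<lambda>\<C>. \<C> \<union> des_set V E h f \<C>) ` {\<C>. independent_set V E h f \<C>} = {\<C>. d_closed V E h f \<C>}"
  proof
    show "(\<lambda>\<C>. \<C> \<union> des_set V E h f \<C>) ` {\<C>. independent_set V E h f \<C>} \<subseteq> {\<C>. d_closed V E h f \<C>}"
      using g_dclosed by blast
    show "{\<C>. d_closed V E h f \<C>} \<subseteq> (\<lambda>\<C>. \<C> \<union> des_set V E h f \<C>) ` {\<C>. independent_set V E h f \<C>}"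
    proof
      fix D assume "D \<in> {\<C>. d_closed V E h f \<C>}"
      hence D: "d_closed V E h f D" by simp
      show "D \<in> (\<lambda>\<C>. \<C> \<union> des_set V E h f \<C>) ` {\<C>. independent_set V E h f \<C>}"
        using surj_part[OF D] by (metis (mono_tags, lifting) image_eqI mem_Collect_eq)
    qed
  qed
qed

end


theorem lemma8:
  fixes V :: "'v set" and E :: "'v set set" and h :: nat
    and f :: "'v node \<Rightarrow> 'v node \<Rightarrow> real"
  assumes "simple_graph V E"
    and "h \<ge> 2"
    and "\<forall>v\<in>V. \<exists>K. is_hclique V E h K \<and> v \<in> K"
    and "is_max_flow V E h f"
  shows "bij_betw (\<lambda>\<C>. \<C> \<union> des_set V E h f \<C>)
           {\<C>. independent_set V E h f \<C>} {\<C>. d_closed V E h f \<C>}"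
proof -
  interpret netw V E h f using assms by (unfold_locales) auto
  show ?thesis by (rule bij)
qed

end
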